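(* Let $0<\alpha<1$ and $\xi\in\mathbb{R}$, and for $1<\tau<2$ define $$T_s:=\frac{\sin\pi(1-\tau+\alpha-i\xi)}{\sin\pi(1-\tau+2\alpha-i\xi)},\qquad T_B:=\frac{\sin\pi\alpha}{\pi}\,B(\tau-2\alpha+1+i\xi,2\alpha).$$ (a) If $\xi=0$ and $1<\tau<2$, then there exists a unique $\alpha_c$ such that $T_s=T_B$ exactly when $\tau=1+\alpha_c$. (b) If $\xi\ge\tfrac14$ and $1+\alpha\le\tau<2$, then $|T_s|>|T_B|$. (c) If $0<\xi<\tfrac14$ and $1+\alpha\le\tau<2$, then $\arg T_s\ne\arg T_B$. (d) If $\xi>0$ and $1<\tau<1+\alpha$, then $\arg T_s\ne\arg T_B$. Consequently, for given $0<\alpha<1$, the equation $T_s=T_B$ has a unique solution $(\tau,\xi)$ with $1<\tau<2$, $\xi\in\mathbb{R}$, namely $\xi=0$, $\tau=1+\alpha_c$; in particular for $\xi\ne0$ there are no solutions with $1<\tau<2$.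
   Context: $B(a,b)=\Gamma(a)\Gamma(b)/\Gamma(a+b)$ is the Beta function extended to complex arguments. $\arg$ denotes the principal argument, with values in $(-\pi,\pi]$. For $\xi=0$ the equation $T_s=T_B$ is equivalent to $\Gamma(2\alpha-\tau)\Gamma(\tau+1)\sin\pi(\alpha-\tau)=\Gamma(2\alpha)\sin\pi\alpha$. *)

theory Defs
  imports "HOL-Analysis.Analysis"
begin

definition Ts :: "real \<Rightarrow> real \<Rightarrow> real \<Rightarrow> complex" where
  "Ts \<alpha> \<tau> \<xi> =
     sin (complex_of_real pi * (complex_of_real (1 - \<tau> + \<alpha>) - \<i> * complex_of_real \<xi>)) /
     sin (complex_of_real pi * (complex_of_real (1 - \<tau> + 2 * \<alpha>) - \<i> * complex_of_real \<xi>))"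

definition TB :: "real \<Rightarrow> real \<Rightarrow> real \<Rightarrow> complex" where
  "TB \<alpha> \<tau> \<xi> =
     complex_of_real (sin (pi * \<alpha>) / pi) *
     Beta (complex_of_real (\<tau> - 2 * \<alpha> + 1) + \<i> * complex_of_real \<xi>) (complex_of_real (2 * \<alpha>))"

end

theory Submission
  imports Defs
begin

definition zz :: "real \<Rightarrow> real \<Rightarrow> real \<Rightarrow> complex" where
  "zz \<alpha> \<tau> \<xi> = complex_of_real (\<tau> - 2 * \<alpha> + 1) + \<i> * complex_of_real \<xi>"

lemma Ts_sin: "Ts \<alpha> \<tau> \<xi> = sin (of_real pi * (zz \<alpha> \<tau> \<xi> + of_real \<alpha>)) / sin (of_real pi * zz \<alpha> \<tau> \<xi>)"
proof -
  have 1: "complex_of_real pi * (complex_of_real (1 - \<tau> + \<alpha>) - \<i> * complex_of_real \<xi>)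
     = 2 * of_real pi - of_real pi * (zz \<alpha> \<tau> \<xi> + of_real \<alpha>)"
    by (simp add: zz_def algebra_simps)
  have 2: "complex_of_real pi * (complex_of_real (1 - \<tau> + 2 * \<alpha>) - \<i> * complex_of_real \<xi>)
     = 2 * of_real pi - of_real pi * (zz \<alpha> \<tau> \<xi>)"
    by (simp add: zz_def algebra_simps)
  have s: "sin (2 * of_real pi - x) = - sin (x::complex)" for x
    by (simp add: sin_diff)
  show ?thesis unfolding Ts_def 1 2 s by simp
qed

lemma Ts_rGamma: "Ts \<alpha> \<tau> \<xi> = rGamma (zz \<alpha> \<tau> \<xi> + of_real \<alpha>) * rGamma (1 - (zz \<alpha> \<tau> \<xi> + of_real \<alpha>))
   / (rGamma (zz \<alpha> \<tau> \<xi>) * rGamma (1 - zz \<alpha> \<tau> \<xi>))"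
  unfolding Ts_sin rGamma_reflection_complex by (simp add: mult.commute)

lemma TB_Gamma: "TB \<alpha> \<tau> \<xi> = of_real (sin (pi * \<alpha>) / pi) * (Gamma (zz \<alpha> \<tau> \<xi>) * Gamma (of_real (2*\<alpha>)) * rGamma (zz \<alpha> \<tau> \<xi> + of_real (2*\<alpha>)))"
  unfolding TB_def Beta_altdef zz_def by simp

lemma key:
  assumes a: "0 < \<alpha>" "\<alpha> < 1" and z: "rGamma (zz \<alpha> \<tau> \<xi>) \<noteq> 0" "rGamma (1 - zz \<alpha> \<tau> \<xi>) \<noteq> 0"
    and zpos: "rGamma (zz \<alpha> \<tau> \<xi> + of_real (2*\<alpha>)) \<noteq> 0"
  shows "Ts \<alpha> \<tau> \<xi> = of_real (pi / (sin (pi * \<alpha>) * Gamma (2*\<alpha>))) *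
     (rGamma (zz \<alpha> \<tau> \<xi> + of_real \<alpha>) * rGamma (1 - (zz \<alpha> \<tau> \<xi> + of_real \<alpha>)) /
      (rGamma ((zz \<alpha> \<tau> \<xi> + of_real \<alpha>) + of_real \<alpha>) * rGamma (1 + of_real \<alpha> - (zz \<alpha> \<tau> \<xi> + of_real \<alpha>)))) * TB \<alpha> \<tau> \<xi>"
proof -
  have sp: "sin (pi * \<alpha>) > 0" using a by (intro sin_gt_zero) auto
  have gp: "Gamma (2*\<alpha>) > 0" using a by simp
  have g: "Gamma (complex_of_real (2*\<alpha>)) = of_real (Gamma (2*\<alpha>))" by (rule Gamma_complex_of_real)
  have e1: "zz \<alpha> \<tau> \<xi> + of_real \<alpha> + of_real \<alpha> = zz \<alpha> \<tau> \<xi> + of_real (2*\<alpha>)" by simp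
  have e2: "1 + of_real \<alpha> - (zz \<alpha> \<tau> \<xi> + of_real \<alpha>) = 1 - zz \<alpha> \<tau> \<xi>" by simp
  show ?thesis unfolding Ts_rGamma TB_Gamma e1 e2 g using sp gp z zpos
    by (simp add: Gamma_def field_simps)
qed

lemma angle_repr:
  fixes u :: complex assumes "Im u < 0"
  shows "u = of_real (cmod u) * exp (\<i> * of_real (arctan (Re u / (- Im u)) - pi/2))"
proof -
  define c where "c = - Im u"
  define t where "t = Re u / c"
  have c: "c > 0" using assms c_def by simp
  have ru: "Re u = c * t" using c by (simp add: t_def)
  have iu: "Im u = - c" by (simp add: c_def)
  have sq: "sqrt (1 + t\<^sup>2) > 0" by (simp add: add_pos_nonneg)
  have n: "cmod u = c * sqrt (1 + t\<^sup>2)"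
  proof -
    have "(Re u)\<^sup>2 + (Im u)\<^sup>2 = c\<^sup>2 * (1 + t\<^sup>2)" unfolding ru iu by (simp add: algebra_simps power2_eq_square)
    then show ?thesis unfolding cmod_def using c by (simp add: real_sqrt_mult)
  qed
  have e: "exp (\<i> * of_real (arctan t - pi/2)) = Complex (sin (arctan t)) (- cos (arctan t))"
    by (simp add: exp_eq_polar cis.ctr cos_diff sin_diff Complex_eq)
  show ?thesis
    unfolding t_def[symmetric] c_def[symmetric] e n using c sq
    by (simp add: complex_eq_iff sin_arctan cos_arctan ru iu field_simps)
qed

lemma sin_neg_bound:
  fixes lo hi x :: real
  assumes "-pi < lo" "lo \<le> x" "x \<le> hi" "hi < 0"
  shows "sin x \<le> max (sin lo) (sin hi)"
proof (cases "x \<le> -(pi/2)")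
  case True
  have "sin x = sin (-pi - x)" by (simp add: sin_diff)
  also have "\<dots> \<le> sin (-pi - lo)"
    using assms True by (intro sin_monotone_2pi_le) auto
  also have "\<dots> = sin lo" by (simp add: sin_diff)
  finally show ?thesis by simp
next
  case False
  have "sin x \<le> sin hi" using assms False by (intro sin_monotone_2pi_le) auto
  then show ?thesis by simp
qed

lemma sin_neg: "-pi < x \<Longrightarrow> x < 0 \<Longrightarrow> sin x < (0::real)"
  using sin_gt_zero[of "-x"] by simp

lemma term_repr:
  fixes s :: complex and b d :: real
  assumes "Im s < 0"
  shows "(s + of_real b) / (s + of_real d) = of_real (cmod (s + of_real b) / cmod (s + of_real d)) *
     exp (\<i> * of_real (arctan ((Re s + b) / (- Im s)) - arctan ((Re s + d) / (- Im s))))"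
proof -
  have 1: "s + of_real b = of_real (cmod (s + of_real b)) * exp (\<i> * of_real (arctan ((Re s + b) / (- Im s)) - pi/2))"
    using angle_repr[of "s + of_real b"] assms by simp
  have 2: "s + of_real d = of_real (cmod (s + of_real d)) * exp (\<i> * of_real (arctan ((Re s + d) / (- Im s)) - pi/2))"
    using angle_repr[of "s + of_real d"] assms by simp
  have e: "exp (\<i> * of_real (arctan ((Re s + b) / (- Im s)) - arctan ((Re s + d) / (- Im s))))
      = exp (\<i> * of_real (arctan ((Re s + b) / (- Im s)) - pi/2)) / exp (\<i> * of_real (arctan ((Re s + d) / (- Im s)) - pi/2))"
    by (simp add: exp_diff[symmetric] algebra_simps)
  show ?thesis
    apply (subst 1, subst 2)
    unfolding e by (simp add: field_simps)
qed

lemma prod_im_bound: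
  fixes s :: complex and \<alpha> :: real
  assumes s: "Im s < 0" and a: "0 < \<alpha>" "\<alpha> \<le> 1"
  shows "\<exists>\<delta>>0. \<forall>n. Im (\<Prod>k<Suc n. (s + of_real (real k * (real k + 1))) / (s + of_real ((real k + \<alpha>) * (real k + \<alpha> + 1))))
      \<le> - \<delta> * cmod (\<Prod>k<Suc n. (s + of_real (real k * (real k + 1))) / (s + of_real ((real k + \<alpha>) * (real k + \<alpha> + 1))))"
proof -
  define c where "c = - Im s"
  have c: "c > 0" using s by (simp add: c_def)
  define A where "A t = arctan ((Re s + t) / c)" for t
  define b where "b k = real k * (real k + 1)" for k :: nat
  define d where "d k = (real k + \<alpha>) * (real k + \<alpha> + 1)" for k :: nat
  define r where "r k = cmod (s + of_real (b k)) / cmod (s + of_real (d k))" for k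
  define \<Theta> where "\<Theta> n = (\<Sum>k<Suc n. A (b k) - A (d k))" for n
  have Amono: "A x < A y" if "x < y" for x y using that c by (simp add: A_def arctan_less_iff divide_strict_right_mono)
  have Amono': "A x \<le> A y" if "x \<le> y" for x y using that Amono by (cases "x = y") (auto intro: less_imp_le)
  have bd: "b k < d k" for k using a by (simp add: b_def d_def algebra_simps add_pos_nonneg)
  have db: "d k \<le> b (Suc k)" for k
  proof -
    have "(real k + \<alpha>) * (real k + \<alpha> + 1) \<le> (real k + 1) * (real k + 1 + 1)"
      using a by (intro mult_mono) auto
    then show ?thesis by (simp add: b_def d_def add.commute)
  qed
  have P: "(\<Prod>k<Suc n. (s + of_real (b k)) / (s + of_real (d k))) = of_real (\<Prod>k<Suc n. r k) * exp (\<i> * of_real (\<Theta> n))" for n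
  proof -
    have "(\<Prod>k<Suc n. (s + of_real (b k)) / (s + of_real (d k))) = (\<Prod>k<Suc n. of_real (r k) * exp (\<i> * of_real (A (b k) - A (d k))))"
      by (intro prod.cong refl) (simp add: term_repr[OF s] r_def A_def c_def)
    also have "\<dots> = of_real (\<Prod>k<Suc n. r k) * exp (\<i> * of_real (\<Theta> n))"
      by (simp only: prod.distrib \<Theta>_def of_real_prod exp_sum[OF finite_lessThan] sum_distrib_left of_real_sum)
    finally show ?thesis .
  qed
  have rpos: "(\<Prod>k<Suc n. r k) \<ge> 0" for n by (rule prod_nonneg) (auto simp: r_def)
  define lo where "lo = A 0 - pi/2"
  define hi where "hi = A (b 0) - A (d 0)"
  have hi: "hi < 0" using bd[of 0] Amono by (simp add: hi_def)
  have lo: "-pi < lo" "lo < 0" using arctan_bounded[of "(Re s + 0) / c"] by (auto simp: lo_def A_def)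
  have up: "\<Theta> n \<le> hi" for n
  proof -
    have "\<Theta> n = hi + (\<Sum>k\<in>{1..<Suc n}. A (b k) - A (d k))"
      unfolding \<Theta>_def hi_def lessThan_atLeast0 by (simp add: sum.atLeast_Suc_lessThan)
    also have "\<dots> \<le> hi + 0" using bd Amono by (intro add_left_mono sum_nonpos) (auto intro: less_imp_le)
    finally show ?thesis by simp
  qed
  have down: "lo < \<Theta> n" for n
  proof -
    have "(\<Sum>k<Suc n. A (b k) - A (b (Suc k))) \<le> \<Theta> n"
      unfolding \<Theta>_def using db Amono' by (intro sum_mono) (auto simp: algebra_simps)
    moreover have "(\<Sum>k<Suc n. A (b k) - A (b (Suc k))) = A (b 0) - A (b (Suc n))"
      by (rule sum_lessThan_telescope')
    moreover have "A (b (Suc n)) < pi/2" unfolding A_def by (rule arctan_ubound)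
    ultimately show ?thesis by (simp add: lo_def b_def)
  qed
  define \<delta> where "\<delta> = - max (sin lo) (sin hi)"
  have hi': "-pi < hi" unfolding hi_def A_def
    using arctan_lbound[of "(Re s + b 0) / c"] arctan_ubound[of "(Re s + d 0) / c"] by linarith
  have \<delta>: "\<delta> > 0" using sin_neg[OF lo] sin_neg[OF hi' hi] by (simp add: \<delta>_def)
  have sb: "sin (\<Theta> n) \<le> - \<delta>" for n
    using sin_neg_bound[OF lo(1) less_imp_le[OF down[of n]] up[of n] hi] by (simp add: \<delta>_def)
  then have "Im (\<Prod>k<Suc n. (s + of_real (b k)) / (s + of_real (d k)))
      \<le> - \<delta> * cmod (\<Prod>k<Suc n. (s + of_real (b k)) / (s + of_real (d k)))" for n
  proof -
    have i: "Im (of_real R * exp (\<i> * of_real t)) = R * sin t" for R t :: real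
      by (simp add: Im_exp)
    have m: "cmod (of_real R * exp (\<i> * of_real t)) = \<bar>R\<bar>" for R t :: real
      by (simp add: norm_mult)
    have "(\<Prod>k<Suc n. r k) * sin (\<Theta> n) \<le> (\<Prod>k<Suc n. r k) * (- \<delta>)"
      using rpos[of n] sb[of n] by (rule mult_left_mono[rotated])
    then show ?thesis unfolding P i m using rpos[of n] by (simp add: mult.commute)
  qed
  then show ?thesis using \<delta> unfolding b_def d_def by blast
qed

lemma prod_lim:
  fixes w :: "'a :: Gamma" and a :: real
  assumes "w + of_real a \<notin> \<int>\<^sub>\<le>\<^sub>0" "1 + of_real a - w \<notin> \<int>\<^sub>\<le>\<^sub>0"
  shows "(\<lambda>n. exp (of_real (2 * a * ln (of_nat n))) *
     (\<Prod>k<Suc n. ((w + of_nat k) * (1 - w + of_nat k)) / ((w + of_real a + of_nat k) * (1 + of_real a - w + of_nat k))))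
     \<longlonglongrightarrow> rGamma w * rGamma (1 - w) / (rGamma (w + of_real a) * rGamma (1 + of_real a - w))"
proof -
  have lim: "(\<lambda>n. rGamma_series w n * rGamma_series (1 - w) n / (rGamma_series (w + of_real a) n * rGamma_series (1 + of_real a - w) n))
     \<longlonglongrightarrow> rGamma w * rGamma (1 - w) / (rGamma (w + of_real a) * rGamma (1 + of_real a - w))"
    using assms by (intro tendsto_intros) (auto simp: rGamma_eq_zero_iff)
  have pz: "pochhammer (w + of_real a) m \<noteq> 0" "pochhammer (1 + of_real a - w) m \<noteq> 0" for m
    using assms by (auto dest!: pochhammer_eq_0_imp_nonpos_Int)
  have "rGamma_series w n * rGamma_series (1 - w) n / (rGamma_series (w + of_real a) n * rGamma_series (1 + of_real a - w) n)
     = exp (of_real (2 * a * ln (of_nat n))) *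
     (\<Prod>k<Suc n. ((w + of_nat k) * (1 - w + of_nat k)) / ((w + of_real a + of_nat k) * (1 + of_real a - w + of_nat k)))" for n
  proof -
    define L where "L = (of_real (ln (of_nat n)) :: 'a)"
    have e: "exp ((w + of_real a) * L) * exp ((1 + of_real a - w) * L) = exp (of_real (2 * a * ln (of_nat n))) * (exp (w * L) * exp ((1 - w) * L))"
      by (simp add: L_def exp_add[symmetric] algebra_simps)
    have p: "(\<Prod>k<Suc n. ((w + of_nat k) * (1 - w + of_nat k)) / ((w + of_real a + of_nat k) * (1 + of_real a - w + of_nat k)))
      = pochhammer w (n+1) * pochhammer (1 - w) (n+1) / (pochhammer (w + of_real a) (n+1) * pochhammer (1 + of_real a - w) (n+1))"
      by (simp add: pochhammer_prod prod_dividef prod.distrib atLeast0LessThan)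
    show ?thesis
      unfolding rGamma_series_def p L_def[symmetric] using pz e
      by (simp add: field_simps)
  qed
  with lim show ?thesis by simp
qed

lemma ImQ_neg:
  fixes w :: complex and \<alpha> :: real
  assumes s: "Im (w * (1 - w)) < 0" and a: "0 < \<alpha>" "\<alpha> \<le> 1"
    and nz: "w + of_real \<alpha> \<notin> \<int>\<^sub>\<le>\<^sub>0" "1 + of_real \<alpha> - w \<notin> \<int>\<^sub>\<le>\<^sub>0" "rGamma w \<noteq> 0" "rGamma (1 - w) \<noteq> 0"
  shows "Im (rGamma w * rGamma (1 - w) / (rGamma (w + of_real \<alpha>) * rGamma (1 + of_real \<alpha> - w))) < 0"
proof -
  define Q where "Q = rGamma w * rGamma (1 - w) / (rGamma (w + of_real \<alpha>) * rGamma (1 + of_real \<alpha> - w))"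
  define s where "s = w * (1 - w)"
  define X where "X n = exp (of_real (2 * \<alpha> * ln (of_nat n))) *
     (\<Prod>k<Suc n. ((w + of_nat k) * (1 - w + of_nat k)) / ((w + of_real \<alpha> + of_nat k) * (1 + of_real \<alpha> - w + of_nat k)))" for n
  have lim: "X \<longlonglongrightarrow> Q" unfolding X_def Q_def by (rule prod_lim[OF nz(1,2)])
  have t: "((w + of_nat k) * (1 - w + of_nat k)) / ((w + of_real \<alpha> + of_nat k) * (1 + of_real \<alpha> - w + of_nat k))
     = (s + of_real (real k * (real k + 1))) / (s + of_real ((real k + \<alpha>) * (real k + \<alpha> + 1)))" for k
    by (simp add: s_def algebra_simps)
  obtain \<delta> where \<delta>: "\<delta> > 0" and b: "\<And>n. Im (\<Prod>k<Suc n. (s + of_real (real k * (real k + 1))) / (s + of_real ((real k + \<alpha>) * (real k + \<alpha> + 1))))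
      \<le> - \<delta> * cmod (\<Prod>k<Suc n. (s + of_real (real k * (real k + 1))) / (s + of_real ((real k + \<alpha>) * (real k + \<alpha> + 1))))"
    using prod_im_bound[of s \<alpha>] s a unfolding s_def by blast
  have Xb: "Im (X n) \<le> - \<delta> * cmod (X n)" for n
  proof -
    define e where "e = exp (2 * \<alpha> * ln (real n))"
    define P where "P = (\<Prod>k<Suc n. (s + of_real (real k * (real k + 1))) / (s + of_real ((real k + \<alpha>) * (real k + \<alpha> + 1))))"
    have e: "e > 0" by (simp add: e_def)
    have X: "X n = of_real e * P"
      unfolding X_def t e_def P_def by (simp only: exp_of_real)
    have "e * Im P \<le> e * (- \<delta> * cmod P)"
      using b[of n] e unfolding P_def[symmetric] by (intro mult_left_mono) auto
    then show ?thesis unfolding X using e by (simp add: norm_mult algebra_simps)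
  qed
  have l1: "(\<lambda>n. Im (X n)) \<longlonglongrightarrow> Im Q" using lim by (rule tendsto_Im)
  have l2: "(\<lambda>n. - \<delta> * cmod (X n)) \<longlonglongrightarrow> - \<delta> * cmod Q" using lim by (intro tendsto_mult tendsto_const tendsto_norm)
  have "Im Q \<le> - \<delta> * cmod Q"
    by (rule tendsto_le[OF trivial_limit_sequentially l2 l1]) (rule always_eventually, use Xb in simp)
  moreover have "Q \<noteq> 0" using nz by (simp add: Q_def rGamma_eq_zero_iff)
  ultimately show ?thesis using \<delta> unfolding Q_def[symmetric]
  proof -
    assume "Im Q \<le> - \<delta> * cmod Q" "Q \<noteq> 0"
    then have "\<delta> * cmod Q > 0" using \<delta> by simp
    with \<open>Im Q \<le> - \<delta> * cmod Q\<close> show "Im Q < 0" by linarith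
  qed
qed

lemma npI: "(z::complex) \<in> \<int>\<^sub>\<le>\<^sub>0 \<Longrightarrow> Im z = 0 \<and> Re z \<le> 0"
  by (elim nonpos_Ints_cases') auto

lemma np_Im: "Im (z::complex) \<noteq> 0 \<Longrightarrow> z \<notin> \<int>\<^sub>\<le>\<^sub>0" using npI by blast
lemma np_Re: "Re (z::complex) > 0 \<Longrightarrow> z \<notin> \<int>\<^sub>\<le>\<^sub>0" using npI by force

lemma Re_zz [simp]: "Re (zz \<alpha> \<tau> \<xi>) = \<tau> - 2 * \<alpha> + 1" and Im_zz [simp]: "Im (zz \<alpha> \<tau> \<xi>) = \<xi>"
  by (simp_all add: zz_def)

lemma TB_nz:
  assumes "0 < \<alpha>" "\<alpha> < 1" "\<tau> - 2 * \<alpha> + 1 > 0"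
  shows "TB \<alpha> \<tau> \<xi> \<noteq> 0"
proof -
  have "sin (pi * \<alpha>) > 0" using assms by (intro sin_gt_zero) auto
  moreover have "Gamma (zz \<alpha> \<tau> \<xi>) \<noteq> 0" using assms by (simp add: Gamma_eq_zero_iff np_Re)
  moreover have "Gamma (complex_of_real (2*\<alpha>)) \<noteq> 0"
  proof -
    have "Gamma (2*\<alpha>) > 0" using assms by simp
    then show ?thesis by (simp only: Gamma_complex_of_real of_real_eq_0_iff)
  qed
  moreover have "rGamma (zz \<alpha> \<tau> \<xi> + of_real (2*\<alpha>)) \<noteq> 0" using assms by (simp add: rGamma_eq_zero_iff np_Re)
  ultimately show ?thesis unfolding TB_Gamma by simp
qed

lemma main_pos:
  assumes a: "0 < \<alpha>" "\<alpha> < 1" and t: "1 < \<tau>" and x: "\<xi> > 0"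
  shows "Im (Ts \<alpha> \<tau> \<xi> / TB \<alpha> \<tau> \<xi>) < 0"
proof -
  define z where "z = zz \<alpha> \<tau> \<xi>"
  define w where "w = z + of_real \<alpha>"
  have rw: "Re w = \<tau> + 1 - \<alpha>" "Im w = \<xi>" by (simp_all add: w_def z_def)
  have s: "Im (w * (1 - w)) < 0"
  proof -
    have "Im (w * (1 - w)) = Im w * (1 - 2 * Re w)" by (simp add: algebra_simps)
    also have "\<dots> = \<xi> * (1 - 2 * (\<tau> + 1 - \<alpha>))" using rw by simp
    also have "\<dots> < 0" using a t x by (intro mult_pos_neg) auto
    finally show ?thesis .
  qed
  have n1: "w + of_real \<alpha> \<notin> \<int>\<^sub>\<le>\<^sub>0" using rw a t by (intro np_Re) auto
  have n2: "1 + of_real \<alpha> - w \<notin> \<int>\<^sub>\<le>\<^sub>0" using rw x by (intro np_Im) auto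
  have n3: "rGamma w \<noteq> 0" "rGamma (1 - w) \<noteq> 0" using rw x by (auto simp: rGamma_eq_zero_iff intro!: np_Im)
  have Q: "Im (rGamma w * rGamma (1 - w) / (rGamma (w + of_real \<alpha>) * rGamma (1 + of_real \<alpha> - w))) < 0"
    using ImQ_neg[OF s _ _ n1 n2 n3] a by simp
  have k: "Ts \<alpha> \<tau> \<xi> = of_real (pi / (sin (pi * \<alpha>) * Gamma (2*\<alpha>))) *
     (rGamma w * rGamma (1 - w) / (rGamma (w + of_real \<alpha>) * rGamma (1 + of_real \<alpha> - w))) * TB \<alpha> \<tau> \<xi>"
    unfolding w_def z_def
    by (rule key[OF a]) (use x a t in \<open>auto simp: rGamma_eq_zero_iff dest!: npI\<close>)
  have K: "pi / (sin (pi * \<alpha>) * Gamma (2*\<alpha>)) > 0"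
    using a sin_gt_zero[of "pi * \<alpha>"] by (intro divide_pos_pos mult_pos_pos) auto
  have nz: "TB \<alpha> \<tau> \<xi> \<noteq> 0" using a t by (intro TB_nz) auto
  define Kc where "Kc = pi / (sin (pi * \<alpha>) * Gamma (2*\<alpha>))"
  define Qc where "Qc = rGamma w * rGamma (1 - w) / (rGamma (w + of_real \<alpha>) * rGamma (1 + of_real \<alpha> - w))"
  have "Ts \<alpha> \<tau> \<xi> / TB \<alpha> \<tau> \<xi> = of_real Kc * Qc" unfolding k Kc_def[symmetric] Qc_def[symmetric] using nz by simp
  then show ?thesis using K Q unfolding Kc_def[symmetric] Qc_def[symmetric] by (simp add: mult_pos_neg)
qed

lemma main_pos2:
  assumes a: "0 < \<alpha>" "\<alpha> < 1" and t: "1 < \<tau>" and x: "\<xi> > 0"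
  shows "Arg (Ts \<alpha> \<tau> \<xi>) \<noteq> Arg (TB \<alpha> \<tau> \<xi>)" "Ts \<alpha> \<tau> \<xi> \<noteq> TB \<alpha> \<tau> \<xi>"
proof -
  have im: "Im (Ts \<alpha> \<tau> \<xi> / TB \<alpha> \<tau> \<xi>) < 0" by (rule main_pos[OF assms])
  have nz: "TB \<alpha> \<tau> \<xi> \<noteq> 0" using a t by (intro TB_nz) auto
  have nz2: "Ts \<alpha> \<tau> \<xi> \<noteq> 0" using im by auto
  show "Ts \<alpha> \<tau> \<xi> \<noteq> TB \<alpha> \<tau> \<xi>" using im nz by auto
  show "Arg (Ts \<alpha> \<tau> \<xi>) \<noteq> Arg (TB \<alpha> \<tau> \<xi>)"
  proof
    assume eq: "Arg (Ts \<alpha> \<tau> \<xi>) = Arg (TB \<alpha> \<tau> \<xi>)"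
    have 1: "Ts \<alpha> \<tau> \<xi> = of_real (cmod (Ts \<alpha> \<tau> \<xi>)) * exp (\<i> * of_real (Arg (TB \<alpha> \<tau> \<xi>)))"
      using is_Arg_Arg[OF nz2] eq by (simp add: is_Arg_def)
    have 2: "TB \<alpha> \<tau> \<xi> = of_real (cmod (TB \<alpha> \<tau> \<xi>)) * exp (\<i> * of_real (Arg (TB \<alpha> \<tau> \<xi>)))"
      using is_Arg_Arg[OF nz] by (simp add: is_Arg_def)
    have "Ts \<alpha> \<tau> \<xi> / TB \<alpha> \<tau> \<xi> = of_real (cmod (Ts \<alpha> \<tau> \<xi>) / cmod (TB \<alpha> \<tau> \<xi>))"
      by (subst 1, subst 2) (simp add: field_simps)
    with im show False by simp
  qed
qed

lemma prod_lim2: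
  fixes z :: "'a :: Gamma" and b :: real
  assumes "z \<notin> \<int>\<^sub>\<le>\<^sub>0"
  shows "(\<lambda>n. exp (of_real (- (b * ln (of_nat n)))) * (\<Prod>k<Suc n. (z + of_real b + of_nat k) / (z + of_nat k)))
     \<longlonglongrightarrow> Gamma z * rGamma (z + of_real b)"
proof -
  have lim: "(\<lambda>n. Gamma_series z n * rGamma_series (z + of_real b) n) \<longlonglongrightarrow> Gamma z * rGamma (z + of_real b)"
    by (intro tendsto_intros)
  have pz: "pochhammer z m \<noteq> 0" for m
    using assms by (auto dest!: pochhammer_eq_0_imp_nonpos_Int)
  have "Gamma_series z n * rGamma_series (z + of_real b) n
     = exp (of_real (- (b * ln (of_nat n)))) * (\<Prod>k<Suc n. (z + of_real b + of_nat k) / (z + of_nat k))" for n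
  proof -
    define L where "L = (of_real (ln (of_nat n)) :: 'a)"
    have e: "exp (z * L) = exp (of_real (- (b * ln (of_nat n)))) * exp ((z + of_real b) * L)"
      by (simp add: L_def exp_add[symmetric] algebra_simps)
    have p: "(\<Prod>k<Suc n. (z + of_real b + of_nat k) / (z + of_nat k))
      = pochhammer (z + of_real b) (n+1) / pochhammer z (n+1)"
      by (simp add: pochhammer_prod prod_dividef atLeast0LessThan)
    show ?thesis
      unfolding Gamma_series_def rGamma_series_def p L_def[symmetric] using pz e
      by (simp add: field_simps)
  qed
  with lim show ?thesis by simp
qed

lemma Gamma_ratio_bound:
  fixes z :: complex and b :: real
  assumes "Re z > 0" "b \<ge> 0"
  shows "cmod (Gamma z * rGamma (z + of_real b)) \<le> Gamma (Re z) * rGamma (Re z + b)"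
proof -
  define x where "x = Re z"
  have x: "x > 0" using assms by (simp add: x_def)
  have l1: "(\<lambda>n. cmod (exp (of_real (- (b * ln (of_nat n)))) * (\<Prod>k<Suc n. (z + of_real b + of_nat k) / (z + of_nat k))))
     \<longlonglongrightarrow> cmod (Gamma z * rGamma (z + of_real b))"
    by (intro tendsto_norm prod_lim2) (use assms in \<open>auto dest!: npI\<close>)
  have l2: "(\<lambda>n. exp (of_real (- (b * ln (of_nat n)))) * (\<Prod>k<Suc n. (x + of_real b + of_nat k) / (x + of_nat k)))
     \<longlonglongrightarrow> Gamma x * rGamma (x + of_real b)"
    by (intro prod_lim2) (use x in \<open>auto elim!: nonpos_Ints_cases'\<close>)
  have le: "cmod ((z + of_real b + of_nat k) / (z + of_nat k)) \<le> (x + b + real k) / (x + real k)" for k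
  proof -
    define X where "X = x + real k"
    define y where "y = Im z"
    have X: "X > 0" using x by (simp add: X_def)
    have zk: "z + of_nat k = Complex X y" by (simp add: complex_eq_iff X_def x_def y_def)
    have zbk: "z + of_real b + of_nat k = Complex (X + b) y" by (simp add: complex_eq_iff X_def x_def y_def)
    have "cmod (Complex (X + b) y) * X \<le> (X + b) * cmod (Complex X y)"
    proof -
      have sq: "X\<^sup>2 \<le> (X + b)\<^sup>2" using X assms by (intro power_mono) auto
      have "((X + b)\<^sup>2 + y\<^sup>2) * X\<^sup>2 \<le> (X + b)\<^sup>2 * (X\<^sup>2 + y\<^sup>2)"
      proof -
        have "y\<^sup>2 * X\<^sup>2 \<le> y\<^sup>2 * (X + b)\<^sup>2" using sq by (intro mult_left_mono) auto
        then show ?thesis by (simp add: algebra_simps)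
      qed
      then have "sqrt (((X + b)\<^sup>2 + y\<^sup>2) * X\<^sup>2) \<le> sqrt ((X + b)\<^sup>2 * (X\<^sup>2 + y\<^sup>2))"
        by (rule real_sqrt_le_mono)
      then show ?thesis using X assms
        by (simp add: cmod_def real_sqrt_mult)
    qed
    moreover have eq: "(x + b + real k) / (x + real k) = (X + b) / X" by (simp add: X_def algebra_simps)
    moreover have "cmod (Complex X y) > 0" using X by (simp add: complex_eq_iff)
    ultimately show ?thesis unfolding zk zbk eq using X
      by (simp add: norm_divide divide_simps)
  qed
  have "cmod (Gamma z * rGamma (z + of_real b)) \<le> Gamma x * rGamma (x + of_real b)"
  proof (rule tendsto_le[OF trivial_limit_sequentially l2 l1], rule always_eventually, rule allI)
    fix n
    show "cmod (exp (of_real (- (b * ln (of_nat n)))) * (\<Prod>k<Suc n. (z + of_real b + of_nat k) / (z + of_nat k)))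
       \<le> exp (of_real (- (b * ln (of_nat n)))) * (\<Prod>k<Suc n. (x + of_real b + of_nat k) / (x + of_nat k))"
      unfolding norm_mult prod_norm[symmetric]
      by (intro mult_mono prod_mono conjI prod_nonneg) (use le x assms in \<open>auto simp: norm_exp_eq_Re\<close>)
  qed
  then show ?thesis by (simp add: x_def)
qed

lemma Gamma_two: "Gamma (2::real) = 1"
  using Gamma_plus1[of "1::real"] by simp

lemma Gamma_le_1:
  assumes "1 \<le> y" "y \<le> (2::real)"
  shows "Gamma y \<le> 1"
proof -
  have "(ln \<circ> Gamma) ((1 - (y - 1)) *\<^sub>R 1 + (y - 1) *\<^sub>R 2) \<le> (1 - (y - 1)) * (ln \<circ> Gamma) 1 + (y - 1) * (ln \<circ> Gamma) 2"
    using assms by (intro convex_onD[OF log_convex_Gamma_real]) auto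
  then have "ln (Gamma y) \<le> 0" by (simp add: Gamma_two algebra_simps)
  then show ?thesis using assms by (simp add: ln_le_zero_iff)
qed

lemma Gamma_ge_1:
  assumes "2 \<le> (y::real)"
  shows "1 \<le> Gamma y"
proof (cases "y = 2")
  case True then show ?thesis by (simp add: Gamma_two)
next
  case False
  then have "Gamma 2 < Gamma y" using assms by (intro Gamma_real_strict_mono) auto
  then show ?thesis by (simp add: Gamma_two)
qed

lemma TB_bound:
  assumes a: "0 < \<alpha>" "\<alpha> < 1" and t: "1 + \<alpha> \<le> \<tau>" "\<tau> < 2"
  shows "cmod (TB \<alpha> \<tau> \<xi>) \<le> 1/2"
proof -
  define x where "x = \<tau> - 2 * \<alpha> + 1"
  have x: "x > 0" "2 - \<alpha> \<le> x" using a t by (auto simp: x_def)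
  have sp: "sin (pi * \<alpha>) > 0" using a by (intro sin_gt_zero) auto
  have gp: "Gamma (2*\<alpha>) > 0" using a by simp
  have "cmod (TB \<alpha> \<tau> \<xi>) = sin (pi * \<alpha>) / pi * Gamma (2*\<alpha>) * cmod (Gamma (zz \<alpha> \<tau> \<xi>) * rGamma (zz \<alpha> \<tau> \<xi> + of_real (2*\<alpha>)))"
  proof -
    have g: "Gamma (complex_of_real (2*\<alpha>)) = of_real (Gamma (2*\<alpha>))" by (rule Gamma_complex_of_real)
    show ?thesis unfolding TB_Gamma g norm_mult using sp gp by (simp add: norm_divide)
  qed
  also have "\<dots> \<le> sin (pi * \<alpha>) / pi * Gamma (2*\<alpha>) * (Gamma x * rGamma (x + 2*\<alpha>))"
    using Gamma_ratio_bound[of "zz \<alpha> \<tau> \<xi>" "2*\<alpha>"] x a sp gp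
    by (intro mult_left_mono) (auto simp: x_def)
  also have "\<dots> \<le> 1/2"
  proof (cases "\<alpha> \<le> 1/2")
    case True
    have "Gamma x < Gamma (x + 2*\<alpha>)" using x a True by (intro Gamma_real_strict_mono) auto
    then have r: "Gamma x * rGamma (x + 2*\<alpha>) \<le> 1" using x a
      by (simp add: rGamma_inverse_Gamma field_simps)
    have "sin (pi * \<alpha>) \<le> pi * \<alpha>" using a by (intro sin_x_le_x) auto
    then have s: "sin (pi * \<alpha>) / pi \<le> \<alpha>" by (simp add: field_simps)
    have g: "\<alpha> * Gamma (2*\<alpha>) \<le> 1/2"
    proof -
      have "2*\<alpha> \<notin> \<int>\<^sub>\<le>\<^sub>0" using a by (auto elim!: nonpos_Ints_cases')
      then have "Gamma (2*\<alpha> + 1) = 2*\<alpha> * Gamma (2*\<alpha>)" using Gamma_plus1[of "2*\<alpha>"] by simp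
      moreover have "Gamma (2*\<alpha> + 1) \<le> 1" using a True by (intro Gamma_le_1) auto
      ultimately show ?thesis by simp
    qed
    have "sin (pi * \<alpha>) / pi * Gamma (2*\<alpha>) * (Gamma x * rGamma (x + 2*\<alpha>)) \<le> \<alpha> * Gamma (2*\<alpha>) * 1"
      using s r gp sp x a by (intro mult_mono) (auto simp: rGamma_inverse_Gamma)
    then show ?thesis using g by linarith
  next
    case False
    have r: "Gamma x * rGamma (x + 2*\<alpha>) \<le> 1"
    proof -
      have "Gamma x \<le> 1" using x a t False by (intro Gamma_le_1) (auto simp: x_def)
      moreover have "1 \<le> Gamma (x + 2*\<alpha>)" using x a False by (intro Gamma_ge_1) auto
      ultimately show ?thesis using x by (simp add: rGamma_inverse_Gamma field_simps)
    qed
    have g: "Gamma (2*\<alpha>) \<le> 1" using a False by (intro Gamma_le_1) auto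
    have s: "sin (pi * \<alpha>) / pi \<le> 1/pi" using sin_le_one by (simp add: divide_right_mono)
    have "sin (pi * \<alpha>) / pi * Gamma (2*\<alpha>) * (Gamma x * rGamma (x + 2*\<alpha>)) \<le> 1/pi * 1 * 1"
      using s r g gp sp x a Gamma_real_pos[of x] Gamma_real_pos[of "x + 2*\<alpha>"] by (intro mult_mono) (auto simp: rGamma_inverse_Gamma)
    also have "\<dots> \<le> 1/2" using pi_gt3 by simp
    finally show ?thesis .
  qed
  finally show ?thesis .
qed

lemma Ts_bound:
  assumes x: "1/4 \<le> \<xi>"
  shows "cmod (Ts \<alpha> \<tau> \<xi>) > 1/2"
proof -
  define u where "u = of_real pi * (zz \<alpha> \<tau> \<xi> + of_real \<alpha>)"
  define v where "v = of_real pi * zz \<alpha> \<tau> \<xi>"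
  define E where "E = exp (2 * (pi * \<xi>))"
  define P where "P = E + inverse E"
  have iu: "Im u = pi * \<xi>" "Im v = pi * \<xi>" by (simp_all add: u_def v_def)
  have E3: "E > 3"
  proof -
    have "(1 + pi/4) \<le> exp (pi/4)" by (rule exp_ge_add_one_self)
    then have "(1 + pi/4)^2 \<le> exp (pi/4) ^ 2" by (intro power_mono) (use pi_gt_zero in auto)
    also have "exp (pi/4) ^ 2 = exp (pi/2)" by (simp add: exp_double[symmetric] power2_eq_square exp_add[symmetric])
    also have "exp (pi/2) \<le> E" unfolding E_def using x pi_gt_zero by (simp add: mult_left_mono)
    finally have "(1 + pi/4)^2 \<le> E" .
    moreover have "3 < (1 + pi/4)^2"
    proof -
      have "3 * 3 < pi * pi" using pi_gt3 by (intro mult_strict_mono) auto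
      then show ?thesis using pi_gt3 by (simp add: power2_eq_square algebra_simps)
    qed
    ultimately show ?thesis by linarith
  qed
  have P: "P > 10/3"
  proof -
    have "0 < (3 * E - 1) * (E - 3)" using E3 by (intro mult_pos_pos) auto
    then have "10 * E < 3 * (E * E + 1)" by (simp add: algebra_simps)
    then have "10 < 3 * (E + inverse E)" using E3 by (simp add: field_simps)
    then show ?thesis by (simp add: P_def)
  qed
  have nu: "(cmod (sin u))\<^sup>2 = (P - 2 * cos (2 * Re u)) / 4" unfolding norm_sin_squared iu P_def E_def by simp
  have nv: "(cmod (sin v))\<^sup>2 = (P - 2 * cos (2 * Re v)) / 4" unfolding norm_sin_squared iu P_def E_def by simp
  have "(cmod (sin v))\<^sup>2 \<le> (P + 2) / 4" unfolding nv using cos_ge_minus_one[of "2 * Re v"] by (intro divide_right_mono) linarith+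
  moreover have "(cmod (sin u))\<^sup>2 \<ge> (P - 2) / 4" unfolding nu using cos_le_one[of "2 * Re u"] by (intro divide_right_mono) linarith+
  ultimately have "(cmod (sin v))\<^sup>2 < (2 * cmod (sin u))\<^sup>2" using P by (simp add: power_mult_distrib)
  then have lt: "cmod (sin v) < 2 * cmod (sin u)" by (rule power2_less_imp_less) simp
  have v0: "cmod (sin v) > 0"
  proof -
    have "(cmod (sin v))\<^sup>2 \<ge> (P - 2) / 4" unfolding nv using cos_le_one[of "2 * Re v"] by (intro divide_right_mono) linarith+
    moreover have "(P - 2) / 4 > 0" using P by simp
    ultimately have "(cmod (sin v))\<^sup>2 > 0" by (rule order.strict_trans2[rotated])
    then show ?thesis by (metis norm_ge_zero order_le_less power2_eq_square mult_zero_left less_irrefl)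
  qed
  have "cmod (Ts \<alpha> \<tau> \<xi>) = cmod (sin u) / cmod (sin v)" unfolding Ts_sin u_def v_def by (simp add: norm_divide)
  moreover have "cmod (sin u) / cmod (sin v) > 1/2"
    using lt v0 by (simp add: field_simps)
  ultimately show ?thesis by simp
qed

definition Tr :: "real \<Rightarrow> real \<Rightarrow> real" where
  "Tr \<alpha> \<tau> = sin (pi * (1 - \<tau> + \<alpha>)) / sin (pi * (1 - \<tau> + 2 * \<alpha>))"
definition Br :: "real \<Rightarrow> real \<Rightarrow> real" where
  "Br \<alpha> \<tau> = sin (pi * \<alpha>) / pi * (Gamma (\<tau> - 2 * \<alpha> + 1) * Gamma (2 * \<alpha>) * rGamma (\<tau> + 1))"
definition Qr :: "real \<Rightarrow> real \<Rightarrow> real" where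
  "Qr \<alpha> w = rGamma w * rGamma (1 - w) / (rGamma (w + \<alpha>) * rGamma (1 + \<alpha> - w))"

lemma rGamma_reflection_real: "rGamma x * rGamma (1 - x) = sin (pi * x) / (pi :: real)"
proof -
  have "complex_of_real (rGamma x * rGamma (1 - x)) = of_real (sin (pi * x) / pi)"
    using rGamma_reflection_complex[of "of_real x"]
    by (simp add: rGamma_complex_of_real[symmetric] sin_of_real[symmetric])
  then show ?thesis by (simp only: of_real_eq_iff)
qed

lemma Ts0: "Ts \<alpha> \<tau> 0 = of_real (Tr \<alpha> \<tau>)"
  unfolding Ts_def Tr_def by (simp add: sin_of_real[symmetric])

lemma TB0: "TB \<alpha> \<tau> 0 = of_real (Br \<alpha> \<tau>)"
proof -
  have "\<tau> - 2 * \<alpha> + 1 + 2 * \<alpha> = \<tau> + 1" by simp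
  then show ?thesis
    unfolding TB_def Br_def Beta_altdef
    by (simp add: Gamma_complex_of_real[symmetric] rGamma_complex_of_real[symmetric])
qed

lemma key_real:
  assumes a: "0 < \<alpha>" "\<alpha> < 1" and z: "rGamma (\<tau> - 2*\<alpha> + 1) \<noteq> 0" "rGamma (1 - (\<tau> - 2*\<alpha> + 1)) \<noteq> 0"
    and zpos: "rGamma (\<tau> + 1) \<noteq> 0"
  shows "Tr \<alpha> \<tau> = pi / (sin (pi * \<alpha>) * Gamma (2*\<alpha>)) * Qr \<alpha> (\<tau> + 1 - \<alpha>) * Br \<alpha> \<tau>"
proof -
  have sp: "sin (pi * \<alpha>) > 0" using a by (intro sin_gt_zero) auto
  have gp: "Gamma (2*\<alpha>) > 0" using a by simp
  have t: "Tr \<alpha> \<tau> = rGamma (\<tau> + 1 - \<alpha>) * rGamma (1 - (\<tau> + 1 - \<alpha>)) / (rGamma (\<tau> - 2*\<alpha> + 1) * rGamma (1 - (\<tau> - 2*\<alpha> + 1)))"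
  proof -
    have 1: "sin (pi * (1 - \<tau> + \<alpha>)) = - sin (pi * (\<tau> + 1 - \<alpha>))"
    proof -
      have "pi * (1 - \<tau> + \<alpha>) = 2 * pi - pi * (\<tau> + 1 - \<alpha>)" by (simp add: algebra_simps)
      then show ?thesis by (simp add: sin_diff)
    qed
    have 2: "sin (pi * (1 - \<tau> + 2*\<alpha>)) = - sin (pi * (\<tau> - 2*\<alpha> + 1))"
    proof -
      have "pi * (1 - \<tau> + 2*\<alpha>) = 2 * pi - pi * (\<tau> - 2*\<alpha> + 1)" by (simp add: algebra_simps)
      then show ?thesis by (simp add: sin_diff)
    qed
    show ?thesis unfolding Tr_def 1 2 rGamma_reflection_real by simp
  qed
  have e1: "\<tau> + 1 - \<alpha> + \<alpha> = \<tau> + 1" by simp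
  have e2: "1 + \<alpha> - (\<tau> + 1 - \<alpha>) = 1 - (\<tau> - 2*\<alpha> + 1)" by simp
  show ?thesis unfolding t Br_def Qr_def e1 e2 using sp gp z zpos
    by (simp add: Gamma_def field_simps)
qed

lemma not_Int: "of_int m < x \<Longrightarrow> x < of_int m + 1 \<Longrightarrow> (x::real) \<notin> \<int>"
  by (auto elim!: Ints_cases)

lemma not_npInt: "of_int m < x \<Longrightarrow> x < of_int m + 1 \<Longrightarrow> (x::real) \<notin> \<int>\<^sub>\<le>\<^sub>0"
  using not_Int nonpos_Ints_subset_Ints by blast

lemma wsq: "1/2 \<le> c \<Longrightarrow> c < w \<Longrightarrow> c * (c - 1) < w * (w - (1::real))"
proof -
  assume "1/2 \<le> c" "c < w"
  then have "0 < (w - c) * (w + c - 1)" by (intro mult_pos_pos) auto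
  then show ?thesis by (simp add: algebra_simps)
qed

lemma g_mono:
  fixes s1 s2 b d :: real
  assumes "s2 < s1" "b < d" "(s1 + d > 0 \<and> s2 + d > 0) \<or> (s1 + d < 0 \<and> s2 + d < 0)"
  shows "(s2 + b) / (s2 + d) < (s1 + b) / (s1 + d)"
proof -
  have p: "(s1 + d) * (s2 + d) > 0" using assms(3) by (auto intro: mult_pos_pos mult_neg_neg)
  have nz: "s1 + d \<noteq> 0" "s2 + d \<noteq> 0" using assms(3) by auto
  have eq: "(s1 + b) * (s2 + d) - (s2 + b) * (s1 + d) = (d - b) * (s1 - s2)" by (simp add: algebra_simps)
  have "(s1 + b) / (s1 + d) - (s2 + b) / (s2 + d) = (d - b) * (s1 - s2) / ((s1 + d) * (s2 + d))"
    using diff_frac_eq[OF nz, of "s1 + b" "s2 + b"] eq by simp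
  also have "\<dots> > 0" using assms p by (intro divide_pos_pos[OF mult_pos_pos p]) auto
  finally show ?thesis by simp
qed

definition gk :: "real \<Rightarrow> nat \<Rightarrow> real \<Rightarrow> real" where
  "gk \<alpha> k w = ((w + real k) * (1 - w + real k)) / ((w + \<alpha> + real k) * (1 + \<alpha> - w + real k))"

lemma gk_s: "gk \<alpha> k w = (w * (1 - w) + real k * (real k + 1)) / (w * (1 - w) + (real k + \<alpha>) * (real k + \<alpha> + 1))"
  unfolding gk_def by (simp add: algebra_simps)

definition piece :: "real \<Rightarrow> real \<Rightarrow> real \<Rightarrow> bool" where
  "piece \<alpha> w1 w2 \<longleftrightarrow> (1 + \<alpha> < w1 \<and> w2 < 2) \<or> (2 + \<alpha> < w1 \<and> w2 < 3)"

lemma gk_props: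
  assumes a: "0 < \<alpha>" "\<alpha> < 1" and p: "piece \<alpha> w1 w2" and w: "w1 < w2"
  shows "gk \<alpha> k w2 < gk \<alpha> k w1" "0 < gk \<alpha> k w2"
proof -
  define s1 where "s1 = w1 * (1 - w1)"
  define s2 where "s2 = w2 * (1 - w2)"
  define b where "b = real k * (real k + 1)"
  define d where "d = (real k + \<alpha>) * (real k + \<alpha> + 1)"
  have w1: "1 + \<alpha> < w1" "w2 < 3" using p a by (auto simp: piece_def)
  have s12: "s2 < s1" using wsq[of w1 w2] w w1 a by (simp add: s1_def s2_def algebra_simps)
  have bd: "b < d" using a by (simp add: b_def d_def algebra_simps add_pos_nonneg)
  have ss: "(s1 + d > 0 \<and> s2 + d > 0 \<and> s2 + b > 0) \<or> (s1 + d < 0 \<and> s2 + d < 0 \<and> s2 + b < 0)"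
  proof -
    have "w2 * (w2 - 1) < 3 * 2" using wsq[of w2 3] w1 w a by simp
    have A: "\<alpha> * (\<alpha> + 1) < w1 * (w1 - 1)" using wsq[of "1 + \<alpha>" w1] a w1 by (simp add: algebra_simps)
    have A2: "w1 * (w1 - 1) < w2 * (w2 - 1)" using wsq[of w1 w2] a w1 w by simp
    consider "k = 0" | "k = 1" | "k \<ge> 2" by linarith
    then show ?thesis
    proof cases
      case 1
      have "w2 * 1 < w2 * w2" using w1 w a by (intro mult_strict_left_mono) auto
      then show ?thesis using 1 A A2 w1 a by (simp add: s1_def s2_def b_def d_def algebra_simps)
    next
      case 2
      show ?thesis
      proof (cases "w2 < 2")
        case True
        have "w2 * (w2 - 1) < 2 * 1" using wsq[of w2 2] True w w1 a by simp
        moreover have "(1 + \<alpha>) * (2 + \<alpha>) > 2 * 1" using a by (simp add: algebra_simps add_pos_pos)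
        ultimately show ?thesis using 2 A2 a by (simp add: s1_def s2_def b_def d_def algebra_simps)
      next
        case False
        then have q: "2 + \<alpha> < w1" using p by (auto simp: piece_def)
        have "(2 + \<alpha>) * (1 + \<alpha>) < w1 * (w1 - 1)" using wsq[of "2 + \<alpha>" w1] q a by (simp add: algebra_simps)
        moreover have "2 < (2 + \<alpha>) * (1 + \<alpha>)" using a by (simp add: algebra_simps add_pos_pos)
        ultimately show ?thesis using 2 A2 a by (simp add: s1_def s2_def b_def d_def algebra_simps)
      qed
    next
      case 3
      have k: "real k * (real k + 1) \<ge> 2 * 3" using 3 by (intro mult_mono) auto
      have "w2 * (w2 - 1) < 3 * 2" using wsq[of w2 3] w1 w a by simp
      moreover have "real k * (real k + 1) < (real k + \<alpha>) * (real k + \<alpha> + 1)"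
        using a by (simp add: algebra_simps add_pos_nonneg)
      ultimately show ?thesis using k A2 by (simp add: s1_def s2_def b_def d_def algebra_simps)
    qed
  qed
  show "gk \<alpha> k w2 < gk \<alpha> k w1" unfolding gk_s s1_def[symmetric] s2_def[symmetric] b_def[symmetric] d_def[symmetric]
    using g_mono[OF s12 bd] ss by blast
  show "0 < gk \<alpha> k w2" unfolding gk_s s1_def[symmetric] s2_def[symmetric] b_def[symmetric] d_def[symmetric]
    using ss by (auto intro: divide_pos_pos divide_neg_neg)
qed

lemma np_pos: "(x::real) > 0 \<Longrightarrow> x \<notin> \<int>\<^sub>\<le>\<^sub>0"
  by (auto elim!: nonpos_Ints_cases')

lemma Qr_lim:
  fixes w \<alpha> :: real
  assumes "w + \<alpha> \<notin> \<int>\<^sub>\<le>\<^sub>0" "1 + \<alpha> - w \<notin> \<int>\<^sub>\<le>\<^sub>0"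
  shows "(\<lambda>n. exp (2 * \<alpha> * ln (real n)) * (\<Prod>k<Suc n. gk \<alpha> k w)) \<longlonglongrightarrow> Qr \<alpha> w"
  using prod_lim[of w \<alpha>] assms by (simp add: gk_def Qr_def)

lemma piece_np:
  fixes w \<alpha> :: real
  assumes a: "0 < \<alpha>" "\<alpha> < 1" and w: "(1 + \<alpha> < w \<and> w < 2) \<or> (2 + \<alpha> < w \<and> w < 3)"
  shows "w + \<alpha> \<notin> \<int>\<^sub>\<le>\<^sub>0" "1 + \<alpha> - w \<notin> \<int>\<^sub>\<le>\<^sub>0" "rGamma w \<noteq> 0" "rGamma (1 - w) \<noteq> 0"
    "rGamma (w + \<alpha>) \<noteq> 0" "rGamma (1 + \<alpha> - w) \<noteq> 0"
proof -
  show 1: "w + \<alpha> \<notin> \<int>\<^sub>\<le>\<^sub>0" using a w by (intro np_pos) auto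
  show 2: "1 + \<alpha> - w \<notin> \<int>\<^sub>\<le>\<^sub>0"
  proof (cases "w < 2")
    case True then show ?thesis using w a by (intro not_npInt[of "-1"]) auto
  next
    case False then show ?thesis using w a by (intro not_npInt[of "-2"]) auto
  qed
  have 3: "w \<notin> \<int>\<^sub>\<le>\<^sub>0" using a w by (intro np_pos) auto
  have 4: "1 - w \<notin> \<int>\<^sub>\<le>\<^sub>0"
  proof (cases "w < 2")
    case True then show ?thesis using w a by (intro not_npInt[of "-1"]) auto
  next
    case False then show ?thesis using w a by (intro not_npInt[of "-2"]) auto
  qed
  show "rGamma w \<noteq> 0" "rGamma (1 - w) \<noteq> 0" "rGamma (w + \<alpha>) \<noteq> 0" "rGamma (1 + \<alpha> - w) \<noteq> 0"
    using 1 2 3 4 by (simp_all add: rGamma_eq_zero_iff)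
qed

lemma Qr_mono:
  assumes a: "0 < \<alpha>" "\<alpha> < 1" and p: "piece \<alpha> w1 w2" and w: "w1 < w2"
  shows "Qr \<alpha> w2 < Qr \<alpha> w1" "0 < Qr \<alpha> w2"
proof -
  have p1: "(1 + \<alpha> < w1 \<and> w1 < 2) \<or> (2 + \<alpha> < w1 \<and> w1 < 3)" using p w by (auto simp: piece_def)
  have p2: "(1 + \<alpha> < w2 \<and> w2 < 2) \<or> (2 + \<alpha> < w2 \<and> w2 < 3)" using p w by (auto simp: piece_def)
  note n1 = piece_np[OF a p1] and n2 = piece_np[OF a p2]
  define r where "r = gk \<alpha> 0 w1 / gk \<alpha> 0 w2"
  have g0: "0 < gk \<alpha> 0 w2" "gk \<alpha> 0 w2 < gk \<alpha> 0 w1" using gk_props[OF a p w] by auto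
  have r: "r > 1" using g0 by (simp add: r_def)
  have gkm: "0 \<le> gk \<alpha> k w2 \<and> gk \<alpha> k w2 \<le> gk \<alpha> k w1" for k using gk_props[OF a p w, of k] by auto
  define X where "X w n = exp (2 * \<alpha> * ln (real n)) * (\<Prod>k<Suc n. gk \<alpha> k w)" for w n
  have l1: "X w1 \<longlonglongrightarrow> Qr \<alpha> w1" unfolding X_def by (rule Qr_lim[OF n1(1,2)])
  have l2: "X w2 \<longlonglongrightarrow> Qr \<alpha> w2" unfolding X_def by (rule Qr_lim[OF n2(1,2)])
  have Xle: "r * X w2 n \<le> X w1 n" for n
  proof -
    have "(\<Prod>k<n. gk \<alpha> (Suc k) w2) \<le> (\<Prod>k<n. gk \<alpha> (Suc k) w1)" using gkm by (intro prod_mono) auto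
    then have "gk \<alpha> 0 w1 * (\<Prod>k<n. gk \<alpha> (Suc k) w2) \<le> gk \<alpha> 0 w1 * (\<Prod>k<n. gk \<alpha> (Suc k) w1)"
      using g0 by (intro mult_left_mono) auto
    moreover have "r * gk \<alpha> 0 w2 = gk \<alpha> 0 w1" using g0 by (simp add: r_def)
    moreover have e: "(\<Prod>k<Suc n. gk \<alpha> k w) = gk \<alpha> 0 w * (\<Prod>k<n. gk \<alpha> (Suc k) w)" for w
      by (rule prod.lessThan_Suc_shift)
    ultimately have "r * (\<Prod>k<Suc n. gk \<alpha> k w2) \<le> (\<Prod>k<Suc n. gk \<alpha> k w1)"
      unfolding e by (simp add: mult.assoc[symmetric])
    then show ?thesis unfolding X_def by (simp add: mult.left_commute mult_left_mono)
  qed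
  have X2: "0 \<le> X w2 n" for n unfolding X_def using gkm by (intro mult_nonneg_nonneg prod_nonneg) auto
  have "r * Qr \<alpha> w2 \<le> Qr \<alpha> w1"
    by (rule tendsto_le[OF trivial_limit_sequentially l1 tendsto_mult[OF tendsto_const l2]]) (simp add: Xle)
  moreover have "0 \<le> Qr \<alpha> w2"
    by (rule tendsto_le[OF trivial_limit_sequentially l2 tendsto_const]) (simp add: X2)
  moreover have "Qr \<alpha> w2 \<noteq> 0" using n2 by (simp add: Qr_def)
  ultimately show "0 < Qr \<alpha> w2" "Qr \<alpha> w2 < Qr \<alpha> w1" using r
    by (auto simp: less_le) (smt (verit) mult_less_cancel_right1)
qed

lemma Br_pos:
  assumes a: "0 < \<alpha>" "\<alpha> < 1" and t: "\<tau> - 2 * \<alpha> + 1 > 0"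
  shows "Br \<alpha> \<tau> > 0"
proof -
  have "sin (pi * \<alpha>) > 0" using a by (intro sin_gt_zero) auto
  moreover have "Gamma (\<tau> - 2 * \<alpha> + 1) > 0" "Gamma (2*\<alpha>) > 0" "Gamma (\<tau> + 1) > 0" using a t by auto
  ultimately show ?thesis unfolding Br_def by (simp add: rGamma_inverse_Gamma)
qed

lemma sin_nonpos: "-pi \<le> x \<Longrightarrow> x \<le> 0 \<Longrightarrow> sin x \<le> (0::real)"
  using sin_ge_zero[of "-x"] by simp

lemma sin_pi_ge0: "0 \<le> y \<Longrightarrow> y \<le> 1 \<Longrightarrow> 0 \<le> sin (pi * (y::real))"
  by (intro sin_ge_zero) (auto intro: mult_left_le)

lemma sin_pi_le0: "1 \<le> y \<Longrightarrow> y < 2 \<Longrightarrow> sin (pi * (y::real)) \<le> 0"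
  by (intro sin_le_zero) auto

lemma sin_pi_le0': "-1 \<le> y \<Longrightarrow> y \<le> 0 \<Longrightarrow> sin (pi * (y::real)) \<le> 0"
  using sin_pi_ge0[of "-y"] by simp

lemma Tr_nonpos:
  assumes a: "0 < \<alpha>" "\<alpha> < 1" and t: "1 < \<tau>" "\<tau> < 2"
    and n: "\<not> (2*\<alpha> < \<tau> \<and> \<tau> < 1 + \<alpha>)" "\<not> (1 + 2*\<alpha> < \<tau> \<and> \<tau> < 2)"
  shows "Tr \<alpha> \<tau> \<le> 0"
proof (cases "\<tau> \<le> 2*\<alpha>")
  case True
  have "0 \<le> sin (pi * (1 - \<tau> + \<alpha>))" using a t True by (intro sin_pi_ge0) auto
  moreover have "sin (pi * (1 - \<tau> + 2*\<alpha>)) \<le> 0" using a t True by (intro sin_pi_le0) auto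
  ultimately show ?thesis unfolding Tr_def by (rule divide_nonneg_nonpos)
next
  case False
  then have t2: "1 + \<alpha> \<le> \<tau>" "\<tau> \<le> 1 + 2*\<alpha>" using n t by auto
  have "sin (pi * (1 - \<tau> + \<alpha>)) \<le> 0" using a t t2 by (intro sin_pi_le0') auto
  moreover have "0 \<le> sin (pi * (1 - \<tau> + 2*\<alpha>))" using a t t2 by (intro sin_pi_ge0) auto
  ultimately show ?thesis unfolding Tr_def by (rule divide_nonpos_nonneg)
qed

lemma Gamma_refl2: "0 < x \<Longrightarrow> x < 1 \<Longrightarrow> Gamma x * Gamma (1 - x) = pi / sin (pi * (x::real))"
proof -
  have "Gamma x * Gamma (1 - x) = inverse (rGamma x * rGamma (1 - x))"
    by (simp add: Gamma_def inverse_mult_distrib)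
  also have "\<dots> = pi / sin (pi * x)" unfolding rGamma_reflection_real by simp
  finally show ?thesis .
qed

lemma Tr_Br_1:
  assumes a: "0 < \<alpha>" "\<alpha> < 1/2"
  shows "Tr \<alpha> 1 > Br \<alpha> 1"
proof -
  have s2: "sin (pi * (2*\<alpha>)) > 0" using a by (intro sin_gt_zero) auto
  have sp: "sin (pi * \<alpha>) > 0" using a by (intro sin_gt_zero) auto
  have "Tr \<alpha> 1 = sin (pi * \<alpha>) / sin (pi * (2*\<alpha>))" by (simp add: Tr_def)
  moreover have "Br \<alpha> 1 = sin (pi * \<alpha>) * (1 - 2*\<alpha>) / sin (pi * (2*\<alpha>))"
  proof -
    have g1: "Gamma (2 - 2*\<alpha>) = (1 - 2*\<alpha>) * Gamma (1 - 2*\<alpha>)"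
      using Gamma_plus1[of "1 - 2*\<alpha>"] a by (simp add: np_pos)
    have r2: "rGamma (2::real) = 1" by (simp add: rGamma_inverse_Gamma Gamma_two)
    have gr: "Gamma (2*\<alpha>) * Gamma (1 - 2*\<alpha>) = pi / sin (pi * (2*\<alpha>))" using a by (intro Gamma_refl2) auto
    have e: "(1::real) - 2 * \<alpha> + 1 = 2 - 2*\<alpha>" "(1::real) + 1 = 2" by simp_all
    have "Br \<alpha> 1 = sin (pi * \<alpha>) / pi * (Gamma (2 - 2*\<alpha>) * Gamma (2*\<alpha>) * rGamma 2)"
      unfolding Br_def e by simp
    also have "\<dots> = sin (pi * \<alpha>) / pi * ((1 - 2*\<alpha>) * (Gamma (2*\<alpha>) * Gamma (1 - 2*\<alpha>)))"
      unfolding g1 r2 by (simp add: algebra_simps)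
    also have "\<dots> = sin (pi * \<alpha>) / pi * ((1 - 2*\<alpha>) * (pi / sin (pi * (2*\<alpha>))))" unfolding gr ..
    also have "\<dots> = sin (pi * \<alpha>) * (1 - 2*\<alpha>) / sin (pi * (2*\<alpha>))" using s2 by (simp add: field_simps)
    finally show ?thesis .
  qed
  ultimately show ?thesis using a s2 sp by (simp add: divide_strict_right_mono mult_strict_left_mono)
qed

lemma Tr_Br_2:
  assumes a: "0 < \<alpha>" "\<alpha> < 1/2"
  shows "Tr \<alpha> 2 > Br \<alpha> 2"
proof -
  have s2: "sin (pi * (2*\<alpha>)) > 0" using a by (intro sin_gt_zero) auto
  have sp: "sin (pi * \<alpha>) > 0" using a by (intro sin_gt_zero) auto
  have "Tr \<alpha> 2 = sin (pi * \<alpha>) / sin (pi * (2*\<alpha>))"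
  proof -
    have 1: "sin (pi * (1 - 2 + \<alpha>)) = - sin (pi * \<alpha>)"
      using sin_minus_pi[of "pi * \<alpha>"] by (simp add: algebra_simps)
    have 2: "sin (pi * (1 - 2 + 2 * \<alpha>)) = - sin (pi * (2*\<alpha>))"
      using sin_minus_pi[of "pi * (2*\<alpha>)"] by (simp add: algebra_simps)
    show ?thesis unfolding Tr_def 1 2 by simp
  qed
  moreover have "Br \<alpha> 2 = sin (pi * \<alpha>) * ((1 - \<alpha>) * (1 - 2*\<alpha>)) / sin (pi * (2*\<alpha>))"
  proof -
    have g1: "Gamma (2 - 2*\<alpha>) = (1 - 2*\<alpha>) * Gamma (1 - 2*\<alpha>)"
      using Gamma_plus1[of "1 - 2*\<alpha>"] a by (simp add: np_pos)
    have g2: "Gamma (3 - 2*\<alpha>) = (2 - 2*\<alpha>) * Gamma (2 - 2*\<alpha>)"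
      using Gamma_plus1[of "2 - 2*\<alpha>"] a by (simp add: np_pos)
    have r3: "rGamma (3::real) = 1/2"
      using Gamma_plus1[of "2::real"] by (simp add: rGamma_inverse_Gamma Gamma_two)
    have gr: "Gamma (2*\<alpha>) * Gamma (1 - 2*\<alpha>) = pi / sin (pi * (2*\<alpha>))" using a by (intro Gamma_refl2) auto
    have e: "(2::real) - 2 * \<alpha> + 1 = 3 - 2*\<alpha>" "(2::real) + 1 = 3" by simp_all
    have "Br \<alpha> 2 = sin (pi * \<alpha>) / pi * (Gamma (3 - 2*\<alpha>) * Gamma (2*\<alpha>) * rGamma 3)"
      unfolding Br_def e by simp
    also have "\<dots> = sin (pi * \<alpha>) / pi * ((1 - \<alpha>) * (1 - 2*\<alpha>) * (Gamma (2*\<alpha>) * Gamma (1 - 2*\<alpha>)))"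
      unfolding g2 g1 r3 by (simp add: algebra_simps)
    also have "\<dots> = sin (pi * \<alpha>) / pi * ((1 - \<alpha>) * (1 - 2*\<alpha>) * (pi / sin (pi * (2*\<alpha>))))" unfolding gr ..
    also have "\<dots> = sin (pi * \<alpha>) * ((1 - \<alpha>) * (1 - 2*\<alpha>)) / sin (pi * (2*\<alpha>))" using s2 by (simp add: field_simps)
    finally show ?thesis .
  qed
  moreover have "(1 - \<alpha>) * (1 - 2*\<alpha>) < 1"
  proof -
    have "(1 - \<alpha>) * (1 - 2*\<alpha>) < 1 * 1" using a by (intro mult_strict_mono') auto
    then show ?thesis by simp
  qed
  ultimately show ?thesis using a s2 sp by (simp add: divide_strict_right_mono mult_strict_left_mono)
qed

definition Kc :: "real \<Rightarrow> real" where "Kc \<alpha> = pi / (sin (pi * \<alpha>) * Gamma (2*\<alpha>))"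

lemma Kc_pos: "0 < \<alpha> \<Longrightarrow> \<alpha> < 1 \<Longrightarrow> Kc \<alpha> > 0"
  unfolding Kc_def using sin_gt_zero[of "pi * \<alpha>"] by (intro divide_pos_pos mult_pos_pos) auto

lemma f_rel:
  assumes a: "0 < \<alpha>" "\<alpha> < 1" and w: "(1 + \<alpha> < \<tau> + 1 - \<alpha> \<and> \<tau> + 1 - \<alpha> < 2) \<or> (2 + \<alpha> < \<tau> + 1 - \<alpha> \<and> \<tau> + 1 - \<alpha> < 3)"
  shows "Tr \<alpha> \<tau> = Kc \<alpha> * Qr \<alpha> (\<tau> + 1 - \<alpha>) * Br \<alpha> \<tau>"
proof -
  note n = piece_np[OF a w]
  have e1: "1 - (\<tau> - 2*\<alpha> + 1) = 1 + \<alpha> - (\<tau> + 1 - \<alpha>)" by simp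
  have e2: "\<tau> + 1 = \<tau> + 1 - \<alpha> + \<alpha>" by simp
  have "\<tau> - 2*\<alpha> + 1 > 0" using w a by auto
  then have z1: "rGamma (\<tau> - 2*\<alpha> + 1) \<noteq> 0" unfolding rGamma_eq_zero_iff by (rule np_pos)
  have z2: "rGamma (1 - (\<tau> - 2*\<alpha> + 1)) \<noteq> 0" unfolding e1 by (rule n(6))
  have z3: "rGamma (\<tau> + 1) \<noteq> 0" using n(5) by simp
  show ?thesis unfolding Kc_def by (rule key_real[OF a z1 z2 z3])
qed

lemma two_roots:
  assumes a: "0 < \<alpha>" "\<alpha> < 1" and p: "piece \<alpha> (\<tau>1 + 1 - \<alpha>) (\<tau>2 + 1 - \<alpha>)" and t: "\<tau>1 < \<tau>2"
    and r: "Tr \<alpha> \<tau>1 = Br \<alpha> \<tau>1" "Tr \<alpha> \<tau>2 = Br \<alpha> \<tau>2"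
  shows False
proof -
  have w: "\<tau>1 + 1 - \<alpha> < \<tau>2 + 1 - \<alpha>" using t by simp
  have p1: "(1 + \<alpha> < \<tau>1 + 1 - \<alpha> \<and> \<tau>1 + 1 - \<alpha> < 2) \<or> (2 + \<alpha> < \<tau>1 + 1 - \<alpha> \<and> \<tau>1 + 1 - \<alpha> < 3)"
    using p t by (auto simp: piece_def)
  have p2: "(1 + \<alpha> < \<tau>2 + 1 - \<alpha> \<and> \<tau>2 + 1 - \<alpha> < 2) \<or> (2 + \<alpha> < \<tau>2 + 1 - \<alpha> \<and> \<tau>2 + 1 - \<alpha> < 3)"
    using p t by (auto simp: piece_def)
  have b1: "Br \<alpha> \<tau>1 > 0" using p1 a by (intro Br_pos) auto
  have b2: "Br \<alpha> \<tau>2 > 0" using p2 a by (intro Br_pos) auto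
  have 1: "Kc \<alpha> * Qr \<alpha> (\<tau>1 + 1 - \<alpha>) = 1" using f_rel[OF a p1] r(1) b1 by simp
  have 2: "Kc \<alpha> * Qr \<alpha> (\<tau>2 + 1 - \<alpha>) = 1" using f_rel[OF a p2] r(2) b2 by simp
  have "Qr \<alpha> (\<tau>2 + 1 - \<alpha>) < Qr \<alpha> (\<tau>1 + 1 - \<alpha>)" by (rule Qr_mono[OF a p w])
  then have "Kc \<alpha> * Qr \<alpha> (\<tau>2 + 1 - \<alpha>) < Kc \<alpha> * Qr \<alpha> (\<tau>1 + 1 - \<alpha>)" using Kc_pos[OF a] by simp
  with 1 2 show False by simp
qed

lemma B_noroot:
  assumes a: "0 < \<alpha>" "\<alpha> < 1/2" and t: "1 + 2*\<alpha> < \<tau>" "\<tau> < 2"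
  shows "Tr \<alpha> \<tau> > Br \<alpha> \<tau>"
proof -
  have a': "0 < \<alpha>" "\<alpha> < 1" using a by auto
  have p: "piece \<alpha> (\<tau> + 1 - \<alpha>) (2 + 1 - \<alpha>)" using a t by (auto simp: piece_def)
  have p1: "(1 + \<alpha> < \<tau> + 1 - \<alpha> \<and> \<tau> + 1 - \<alpha> < 2) \<or> (2 + \<alpha> < \<tau> + 1 - \<alpha> \<and> \<tau> + 1 - \<alpha> < 3)"
    using a t by auto
  have p2: "(1 + \<alpha> < 2 + 1 - \<alpha> \<and> 2 + 1 - \<alpha> < (2::real)) \<or> (2 + \<alpha> < 2 + 1 - \<alpha> \<and> 2 + 1 - \<alpha> < (3::real))"
    using a by auto
  have b1: "Br \<alpha> \<tau> > 0" using t a by (intro Br_pos) auto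
  have b2: "Br \<alpha> 2 > 0" using a by (intro Br_pos) auto
  have "Kc \<alpha> * Qr \<alpha> (2 + 1 - \<alpha>) * Br \<alpha> 2 > 1 * Br \<alpha> 2" using Tr_Br_2[OF a] f_rel[OF a' p2] by simp
  then have k2: "Kc \<alpha> * Qr \<alpha> (2 + 1 - \<alpha>) > 1" using b2 by (simp only: mult_less_cancel_right)
  have "Qr \<alpha> (2 + 1 - \<alpha>) < Qr \<alpha> (\<tau> + 1 - \<alpha>)" using t by (intro Qr_mono[OF a' p]) simp
  then have "Kc \<alpha> * Qr \<alpha> (\<tau> + 1 - \<alpha>) > 1" using k2 Kc_pos[OF a'] by (smt (verit) mult_strict_left_mono)
  then have "Kc \<alpha> * Qr \<alpha> (\<tau> + 1 - \<alpha>) * Br \<alpha> \<tau> > 1 * Br \<alpha> \<tau>" using b1 by (intro mult_strict_right_mono)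
  then show ?thesis using f_rel[OF a' p1] by simp
qed

lemma h_cont:
  assumes "\<And>\<tau>. \<tau> \<in> {a..b} \<Longrightarrow> 0 < 1 - \<tau> + 2*\<alpha> \<and> 1 - \<tau> + 2*\<alpha> < 1 \<and> 0 < \<tau> - 2*\<alpha> + 1 \<and> 0 < \<tau> + 1"
  shows "continuous_on {a..b} (\<lambda>\<tau>. Tr \<alpha> \<tau> - Br \<alpha> \<tau>)"
proof (intro continuous_at_imp_continuous_on ballI)
  fix \<tau> assume t: "\<tau> \<in> {a..b}"
  note h = assms[OF t]
  have s: "sin (pi * (1 - \<tau> + 2 * \<alpha>)) \<noteq> 0" using h sin_gt_zero[of "pi * (1 - \<tau> + 2 * \<alpha>)"] by auto
  have g: "\<tau> - 2 * \<alpha> + 1 \<notin> \<int>\<^sub>\<le>\<^sub>0" using h by (intro np_pos) auto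
  show "isCont (\<lambda>\<tau>. Tr \<alpha> \<tau> - Br \<alpha> \<tau>) \<tau>"
    unfolding Tr_def Br_def by (intro continuous_intros s g)
qed

lemma exists_root:
  assumes a: "0 < \<alpha>" "\<alpha> < 1"
  shows "\<exists>\<tau>0. 1 < \<tau>0 \<and> 2*\<alpha> < \<tau>0 \<and> \<tau>0 < 1 + \<alpha> \<and> Tr \<alpha> \<tau>0 = Br \<alpha> \<tau>0"
proof -
  have tb: "Tr \<alpha> (1 + \<alpha>) - Br \<alpha> (1 + \<alpha>) < 0" using Br_pos[of \<alpha> "1 + \<alpha>"] a by (simp add: Tr_def)
  obtain c where c: "1 \<le> c" "2*\<alpha> < c" "c < 1 + \<alpha>" "Tr \<alpha> c - Br \<alpha> c > 0"
    "\<And>\<tau>. \<tau> \<in> {c..1+\<alpha>} \<Longrightarrow> 0 < 1 - \<tau> + 2*\<alpha> \<and> 1 - \<tau> + 2*\<alpha> < 1 \<and> 0 < \<tau> - 2*\<alpha> + 1 \<and> 0 < \<tau> + 1"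
  proof (cases "\<alpha> < 1/2")
    case True
    show ?thesis by (rule that[of 1]) (use a True Tr_Br_1[of \<alpha>] in auto)
  next
    case False
    define c where "c = (1 + 3*\<alpha>) / 2"
    have tc: "Tr \<alpha> c = 1"
    proof -
      have 1: "pi * (1 - c + \<alpha>) = pi * ((1 - \<alpha>)/2)" by (simp add: c_def field_simps)
      have 2: "pi * (1 - c + 2*\<alpha>) = pi - pi * ((1 - \<alpha>)/2)" by (simp add: c_def field_simps)
      have "sin (pi * ((1 - \<alpha>)/2)) > 0" using a by (intro sin_gt_zero) auto
      then show ?thesis unfolding Tr_def 1 2 sin_pi_minus by simp
    qed
    have bc: "Br \<alpha> c < 1"
    proof -
      have x1: "Gamma (c - 2*\<alpha> + 1) \<le> 1" using a False by (intro Gamma_le_1) (auto simp: c_def field_simps)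
      have x2: "Gamma (2*\<alpha>) \<le> 1" using a False by (intro Gamma_le_1) auto
      have x3: "rGamma (c + 1) \<le> 1"
      proof -
        have "1 \<le> Gamma (c + 1)" using a False by (intro Gamma_ge_1) (auto simp: c_def)
        then show ?thesis by (simp add: rGamma_inverse_Gamma inverse_le_1_iff)
      qed
      have cp: "c - 2*\<alpha> + 1 > 0" "c + 1 > 0" using a by (auto simp: c_def field_simps)
      have p: "Gamma (c - 2*\<alpha> + 1) > 0" "Gamma (2*\<alpha>) > 0" "rGamma (c + 1) > 0" using a cp
        by (auto simp: rGamma_inverse_Gamma)
      have "Gamma (c - 2*\<alpha> + 1) * Gamma (2*\<alpha>) * rGamma (c + 1) \<le> 1 * 1 * 1"
        using x1 x2 x3 p by (intro mult_mono) auto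
      moreover have "sin (pi * \<alpha>) / pi \<le> 1/pi" using sin_le_one by (simp add: divide_right_mono)
      moreover have "sin (pi * \<alpha>) > 0" using a by (intro sin_gt_zero) auto
      ultimately have "Br \<alpha> c \<le> 1/pi" unfolding Br_def using p
        by (smt (verit, best) divide_pos_pos mult_le_one mult_nonneg_nonneg pi_gt_zero mult_right_le_one_le mult_left_le)
      then show ?thesis using pi_gt3 by (smt (verit) divide_less_eq_1_pos)
    qed
    show ?thesis by (rule that[of c]) (use a False tc bc in \<open>auto simp: c_def\<close>)
  qed
  have "\<exists>x. c \<le> x \<and> x \<le> 1 + \<alpha> \<and> Tr \<alpha> x - Br \<alpha> x = 0"
    by (rule IVT2') (use tb c h_cont[of c "1 + \<alpha>" \<alpha>] in auto)
  then obtain x where x: "c \<le> x" "x \<le> 1 + \<alpha>" "Tr \<alpha> x - Br \<alpha> x = 0" by blast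
  have "x \<noteq> c" "x \<noteq> 1 + \<alpha>" using x c tb by auto
  then show ?thesis using x c by (intro exI[of _ x]) auto
qed

lemma Ts_cnj: "Ts \<alpha> \<tau> (-\<xi>) = cnj (Ts \<alpha> \<tau> \<xi>)"
  unfolding Ts_def by (simp add: cnj_sin)
lemma TB_cnj: "TB \<alpha> \<tau> (-\<xi>) = cnj (TB \<alpha> \<tau> \<xi>)"
  unfolding TB_def Beta_def by (simp add: cnj_Gamma)
lemma real_unique:
  assumes a: "0 < \<alpha>" "\<alpha> < 1"
  shows "\<exists>\<tau>0. 1 < \<tau>0 \<and> \<tau>0 < 2 \<and> Tr \<alpha> \<tau>0 = Br \<alpha> \<tau>0 \<and> (\<forall>\<tau>. 1 < \<tau> \<and> \<tau> < 2 \<and> Tr \<alpha> \<tau> = Br \<alpha> \<tau> \<longrightarrow> \<tau> = \<tau>0)"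
proof -
  obtain \<tau>0 where t0: "1 < \<tau>0" "2*\<alpha> < \<tau>0" "\<tau>0 < 1 + \<alpha>" "Tr \<alpha> \<tau>0 = Br \<alpha> \<tau>0"
    using exists_root[OF a] by blast
  have inA: "2*\<alpha> < \<tau> \<and> \<tau> < 1 + \<alpha>" if t: "1 < \<tau>" "\<tau> < 2" "Tr \<alpha> \<tau> = Br \<alpha> \<tau>" for \<tau>
  proof (rule ccontr)
    assume n: "\<not> (2*\<alpha> < \<tau> \<and> \<tau> < 1 + \<alpha>)"
    have bp: "Br \<alpha> \<tau> > 0" using a t by (intro Br_pos) linarith+
    show False
    proof (cases "1 + 2*\<alpha> < \<tau>")
      case True
      then have h: "\<alpha> < 1/2" using t by linarith
      have "Tr \<alpha> \<tau> > Br \<alpha> \<tau>" by (rule B_noroot[OF a(1) h True t(2)])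
      then show False using t by simp
    next
      case False
      then have "\<not> (1 + 2*\<alpha> < \<tau> \<and> \<tau> < 2)" by simp
      then have "Tr \<alpha> \<tau> \<le> 0" by (rule Tr_nonpos[OF a t(1,2) n])
      then show False using bp t by simp
    qed
  qed
  have uniq: "\<tau> = \<tau>0" if t: "1 < \<tau>" "\<tau> < 2" "Tr \<alpha> \<tau> = Br \<alpha> \<tau>" for \<tau>
  proof (rule ccontr)
    assume ne: "\<tau> \<noteq> \<tau>0"
    have A: "2*\<alpha> < \<tau>" "\<tau> < 1 + \<alpha>" using inA[OF t] by auto
    show False
    proof (cases "\<tau> < \<tau>0")
      case True
      have p: "piece \<alpha> (\<tau> + 1 - \<alpha>) (\<tau>0 + 1 - \<alpha>)" unfolding piece_def using A t0 by linarith
      show False by (rule two_roots[OF a p True t(3) t0(4)])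
    next
      case False
      then have lt: "\<tau>0 < \<tau>" using ne by auto
      have p: "piece \<alpha> (\<tau>0 + 1 - \<alpha>) (\<tau> + 1 - \<alpha>)" unfolding piece_def using A t0 by linarith
      show False by (rule two_roots[OF a p lt t0(4) t(3)])
    qed
  qed
  have "1 < \<tau>0 \<and> \<tau>0 < 2" using t0 a by linarith
  then show ?thesis using t0(4) uniq by blast
qed

lemma root_char:
  assumes a: "0 < \<alpha>" "\<alpha> < 1" and t: "1 < \<tau>" "\<tau> < 2"
    and u: "\<forall>\<tau>. 1 < \<tau> \<and> \<tau> < 2 \<and> Tr \<alpha> \<tau> = Br \<alpha> \<tau> \<longrightarrow> \<tau> = \<tau>0" and r0: "Tr \<alpha> \<tau>0 = Br \<alpha> \<tau>0"
  shows "Ts \<alpha> \<tau> \<xi> = TB \<alpha> \<tau> \<xi> \<longleftrightarrow> \<xi> = 0 \<and> \<tau> = \<tau>0"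
proof (cases "\<xi> = 0")
  case True
  have e: "Ts \<alpha> \<tau> 0 = TB \<alpha> \<tau> 0 \<longleftrightarrow> Tr \<alpha> \<tau> = Br \<alpha> \<tau>" unfolding Ts0 TB0 by (rule of_real_eq_iff)
  have "Tr \<alpha> \<tau> = Br \<alpha> \<tau> \<longleftrightarrow> \<tau> = \<tau>0"
  proof
    assume "Tr \<alpha> \<tau> = Br \<alpha> \<tau>" then show "\<tau> = \<tau>0" using u t by blast
  next
    assume "\<tau> = \<tau>0" then show "Tr \<alpha> \<tau> = Br \<alpha> \<tau>" using r0 by simp
  qed
  then show ?thesis using e True by simp
next
  case False
  have "Ts \<alpha> \<tau> \<xi> \<noteq> TB \<alpha> \<tau> \<xi>"
  proof (cases "\<xi> > 0")
    case True
    show ?thesis by (rule main_pos2(2)[OF a t(1) True])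
  next
    case False2: False
    then have x: "-\<xi> > 0" using False by simp
    have "Ts \<alpha> \<tau> (-\<xi>) \<noteq> TB \<alpha> \<tau> (-\<xi>)" by (rule main_pos2(2)[OF a t(1) x])
    then show ?thesis unfolding Ts_cnj TB_cnj by auto
  qed
  then show ?thesis using False by simp
qed

theorem theorem9p4:
  fixes \<alpha> :: real
  assumes "0 < \<alpha>" and "\<alpha> < 1"
  shows "(\<exists>!\<alpha>c. \<forall>\<tau>. 1 < \<tau> \<and> \<tau> < 2 \<longrightarrow> (Ts \<alpha> \<tau> 0 = TB \<alpha> \<tau> 0 \<longleftrightarrow> \<tau> = 1 + \<alpha>c))
    \<and> (\<forall>\<tau> \<xi>. 1/4 \<le> \<xi> \<and> 1 + \<alpha> \<le> \<tau> \<and> \<tau> < 2 \<longrightarrow> cmod (Ts \<alpha> \<tau> \<xi>) > cmod (TB \<alpha> \<tau> \<xi>))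
    \<and> (\<forall>\<tau> \<xi>. 0 < \<xi> \<and> \<xi> < 1/4 \<and> 1 + \<alpha> \<le> \<tau> \<and> \<tau> < 2 \<longrightarrow> Arg (Ts \<alpha> \<tau> \<xi>) \<noteq> Arg (TB \<alpha> \<tau> \<xi>))
    \<and> (\<forall>\<tau> \<xi>. 0 < \<xi> \<and> 1 < \<tau> \<and> \<tau> < 1 + \<alpha> \<longrightarrow> Arg (Ts \<alpha> \<tau> \<xi>) \<noteq> Arg (TB \<alpha> \<tau> \<xi>))
    \<and> (\<exists>\<alpha>c. (\<forall>\<tau> \<xi>. 1 < \<tau> \<and> \<tau> < 2 \<longrightarrow> (Ts \<alpha> \<tau> \<xi> = TB \<alpha> \<tau> \<xi> \<longleftrightarrow> \<xi> = 0 \<and> \<tau> = 1 + \<alpha>c)))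
    \<and> (\<exists>!p. 1 < fst p \<and> fst p < 2 \<and> Ts \<alpha> (fst p) (snd p) = TB \<alpha> (fst p) (snd p))"
proof -
  note a = assms
  obtain \<tau>0 where t0: "1 < \<tau>0" "\<tau>0 < 2" "Tr \<alpha> \<tau>0 = Br \<alpha> \<tau>0"
    and u: "\<forall>\<tau>. 1 < \<tau> \<and> \<tau> < 2 \<and> Tr \<alpha> \<tau> = Br \<alpha> \<tau> \<longrightarrow> \<tau> = \<tau>0"
    using real_unique[OF a] by blast
  have rc: "Ts \<alpha> \<tau> \<xi> = TB \<alpha> \<tau> \<xi> \<longleftrightarrow> \<xi> = 0 \<and> \<tau> = \<tau>0" if "1 < \<tau>" "\<tau> < 2" for \<tau> \<xi>
    by (rule root_char[OF a that u t0(3)])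
  have r0: "Ts \<alpha> \<tau>0 0 = TB \<alpha> \<tau>0 0" using rc[OF t0(1,2), of 0] by simp
  have P1: "\<exists>!\<alpha>c. \<forall>\<tau>. 1 < \<tau> \<and> \<tau> < 2 \<longrightarrow> (Ts \<alpha> \<tau> 0 = TB \<alpha> \<tau> 0 \<longleftrightarrow> \<tau> = 1 + \<alpha>c)"
  proof (rule ex1I[of _ "\<tau>0 - 1"])
    show "\<forall>\<tau>. 1 < \<tau> \<and> \<tau> < 2 \<longrightarrow> (Ts \<alpha> \<tau> 0 = TB \<alpha> \<tau> 0 \<longleftrightarrow> \<tau> = 1 + (\<tau>0 - 1))"
    proof (intro allI impI)
      fix \<tau> :: real assume "1 < \<tau> \<and> \<tau> < 2"
      then show "Ts \<alpha> \<tau> 0 = TB \<alpha> \<tau> 0 \<longleftrightarrow> \<tau> = 1 + (\<tau>0 - 1)" using rc[of \<tau> 0] by simp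
    qed
  next
    fix c assume h: "\<forall>\<tau>. 1 < \<tau> \<and> \<tau> < 2 \<longrightarrow> (Ts \<alpha> \<tau> 0 = TB \<alpha> \<tau> 0 \<longleftrightarrow> \<tau> = 1 + c)"
    have "Ts \<alpha> \<tau>0 0 = TB \<alpha> \<tau>0 0 \<longleftrightarrow> \<tau>0 = 1 + c" using h t0(1,2) by blast
    with r0 show "c = \<tau>0 - 1" by simp
  qed
  have P2: "\<forall>\<tau> \<xi>. 1/4 \<le> \<xi> \<and> 1 + \<alpha> \<le> \<tau> \<and> \<tau> < 2 \<longrightarrow> cmod (Ts \<alpha> \<tau> \<xi>) > cmod (TB \<alpha> \<tau> \<xi>)"
  proof (intro allI impI)
    fix \<tau> \<xi> :: real assume h: "1/4 \<le> \<xi> \<and> 1 + \<alpha> \<le> \<tau> \<and> \<tau> < 2"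
    have "cmod (TB \<alpha> \<tau> \<xi>) \<le> 1/2" using h by (intro TB_bound[OF a]) auto
    moreover have "cmod (Ts \<alpha> \<tau> \<xi>) > 1/2" using h by (intro Ts_bound) auto
    ultimately show "cmod (Ts \<alpha> \<tau> \<xi>) > cmod (TB \<alpha> \<tau> \<xi>)" by simp
  qed
  have P3: "\<forall>\<tau> \<xi>. 0 < \<xi> \<and> \<xi> < 1/4 \<and> 1 + \<alpha> \<le> \<tau> \<and> \<tau> < 2 \<longrightarrow> Arg (Ts \<alpha> \<tau> \<xi>) \<noteq> Arg (TB \<alpha> \<tau> \<xi>)"
  proof (intro allI impI)
    fix \<tau> \<xi> :: real assume h: "0 < \<xi> \<and> \<xi> < 1/4 \<and> 1 + \<alpha> \<le> \<tau> \<and> \<tau> < 2"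
    then have "1 < \<tau>" "0 < \<xi>" using a by linarith+
    then show "Arg (Ts \<alpha> \<tau> \<xi>) \<noteq> Arg (TB \<alpha> \<tau> \<xi>)" by (rule main_pos2(1)[OF a])
  qed
  have P4: "\<forall>\<tau> \<xi>. 0 < \<xi> \<and> 1 < \<tau> \<and> \<tau> < 1 + \<alpha> \<longrightarrow> Arg (Ts \<alpha> \<tau> \<xi>) \<noteq> Arg (TB \<alpha> \<tau> \<xi>)"
  proof (intro allI impI)
    fix \<tau> \<xi> :: real assume h: "0 < \<xi> \<and> 1 < \<tau> \<and> \<tau> < 1 + \<alpha>"
    then have "1 < \<tau>" "0 < \<xi>" by linarith+
    then show "Arg (Ts \<alpha> \<tau> \<xi>) \<noteq> Arg (TB \<alpha> \<tau> \<xi>)" by (rule main_pos2(1)[OF a])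
  qed
  have P5: "\<exists>\<alpha>c. (\<forall>\<tau> \<xi>. 1 < \<tau> \<and> \<tau> < 2 \<longrightarrow> (Ts \<alpha> \<tau> \<xi> = TB \<alpha> \<tau> \<xi> \<longleftrightarrow> \<xi> = 0 \<and> \<tau> = 1 + \<alpha>c))"
  proof (rule exI[of _ "\<tau>0 - 1"], intro allI impI)
    fix \<tau> \<xi> :: real assume "1 < \<tau> \<and> \<tau> < 2"
    then show "Ts \<alpha> \<tau> \<xi> = TB \<alpha> \<tau> \<xi> \<longleftrightarrow> \<xi> = 0 \<and> \<tau> = 1 + (\<tau>0 - 1)" using rc[of \<tau> \<xi>] by simp
  qed
  have P6: "\<exists>!p. 1 < fst p \<and> fst p < 2 \<and> Ts \<alpha> (fst p) (snd p) = TB \<alpha> (fst p) (snd p)"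
  proof (rule ex1I[of _ "(\<tau>0, 0)"])
    show "1 < fst (\<tau>0, 0::real) \<and> fst (\<tau>0, 0::real) < 2 \<and> Ts \<alpha> (fst (\<tau>0, 0)) (snd (\<tau>0, 0)) = TB \<alpha> (fst (\<tau>0, 0)) (snd (\<tau>0, 0))"
      using t0(1,2) r0 by simp
  next
    fix p :: "real \<times> real" assume h: "1 < fst p \<and> fst p < 2 \<and> Ts \<alpha> (fst p) (snd p) = TB \<alpha> (fst p) (snd p)"
    then have "snd p = 0 \<and> fst p = \<tau>0" using rc[of "fst p" "snd p"] by blast
    then show "p = (\<tau>0, 0)" by (cases p) simp
  qed
  show ?thesis using P1 P2 P3 P4 P5 P6 by (intro conjI)
qed

end
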